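(* Let $(X,d)$ be a metric space and $\ell:X\to[0,+\infty)$ lower semicontinuous with $\inf_X\ell=0$. If $\lambda>0$, then $u_\lambda:=T_\lambda^\infty\frac{\ell}{\lambda}$ is the Perron solution of $(\mathcal{G}_\lambda)$. If $\lambda=0$ and $\ell$ satisfies $(H_0)$, then the function \[u_0(x):=\inf\Big\{\sum_{n=0}^\infty\ell(x_n)d(x_n,x_{n+1}):\{x_n\}_n\subset X,\ x_0=x,\ \lim_{n\to\infty}\ell(x_n)=0\Big\},\quad x\in X,\] is the Perron solution of $(\mathcal{G}_0)$.
   Context: Global slope: $G[u](x)=\sup_{y\neq x}\frac{(u(x)-u(y))_+}{d(x,y)}$ if $u(x)<+\infty$, $G[u](x)=+\infty$ otherwise. A solution of $(\mathcal{G}_\lambda)$ ($\lambda\ge0$) is a lower semicontinuous $u:X\to\mathbb{R}\cup\{+\infty\}$ with $\inf_Xu=0$ and $\lambda u+G[u]=\ell$ on $X$. The Perron solution of $(\mathcal{G}_\lambda)$ is a solution $u$ such that $u(x)=\sup\{v(x): v\text{ solution of }(\mathcal{G}_\lambda)\}$ for all $x$. For $u:X\to[0,+\infty]$, $T_\lambda u(x)=\inf_{y\in X}\frac{u(y)+\ell(x)d(x,y)}{1+\lambda d(x,y)}$ and $T_\lambda^\infty u=\lim_{n\to\infty}T_\lambda^nu$ pointwise. Hypothesis $(H_0)$: there is $\{\bar x_n\}_n\subset X$ with $\sum_n\ell(\bar x_n)d(\bar x_n,\bar x_{n+1})<+\infty$ and $\lim_n\ell(\bar x_n)=0$. *)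

theory Defs
  imports "HOL-Analysis.Analysis"
begin

definition lsc :: "('a::topological_space \<Rightarrow> 'b::linorder) \<Rightarrow> bool" where
  "lsc f \<longleftrightarrow> (\<forall>t. open {y. t < f y})"

(* global slope; values in [0,+\<infinity>]; the 0 in the Sup only matters when X is a singleton *)
definition gslope :: "('a::metric_space \<Rightarrow> ereal) \<Rightarrow> 'a \<Rightarrow> ereal" where
  "gslope u x = (if u x < \<infinity>
      then Sup ({0} \<union> {max (u x - u y) 0 / ereal (dist x y) | y. y \<noteq> x})
      else \<infinity>)"

definition is_solution :: "real \<Rightarrow> ('a::metric_space \<Rightarrow> real) \<Rightarrow> ('a \<Rightarrow> ereal) \<Rightarrow> bool" where
  "is_solution lam l u \<longleftrightarrow> lsc u \<and> (\<forall>x. u x \<noteq> -\<infinity>) \<and> (INF x. u x) = 0 \<and>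
     (\<forall>x. ereal lam * u x + gslope u x = ereal (l x))"

definition is_perron_solution :: "real \<Rightarrow> ('a::metric_space \<Rightarrow> real) \<Rightarrow> ('a \<Rightarrow> ereal) \<Rightarrow> bool" where
  "is_perron_solution lam l u \<longleftrightarrow> is_solution lam l u \<and>
     (\<forall>x. u x = Sup {v x | v. is_solution lam l v})"

definition Top :: "real \<Rightarrow> ('a::metric_space \<Rightarrow> real) \<Rightarrow> ('a \<Rightarrow> ereal) \<Rightarrow> 'a \<Rightarrow> ereal" where
  "Top lam l u x = (INF y. (u y + ereal (l x * dist x y)) / ereal (1 + lam * dist x y))"

definition Top_inf :: "real \<Rightarrow> ('a::metric_space \<Rightarrow> real) \<Rightarrow> ('a \<Rightarrow> ereal) \<Rightarrow> 'a \<Rightarrow> ereal" where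
  "Top_inf lam l u x = lim (\<lambda>n. ((Top lam l) ^^ n) u x)"

definition H0 :: "('a::metric_space \<Rightarrow> real) \<Rightarrow> bool" where
  "H0 l \<longleftrightarrow> (\<exists>xs::nat \<Rightarrow> 'a. summable (\<lambda>n. l (xs n) * dist (xs n) (xs (Suc n))) \<and>
                  (\<lambda>n. l (xs n)) \<longlonglongrightarrow> 0)"

definition u0 :: "('a::metric_space \<Rightarrow> real) \<Rightarrow> 'a \<Rightarrow> ereal" where
  "u0 l x = (INF xs \<in> {xs::nat \<Rightarrow> 'a. xs 0 = x \<and> (\<lambda>n. l (xs n)) \<longlonglongrightarrow> 0}.
               (\<Sum>n. ereal (l (xs n) * dist (xs n) (xs (Suc n)))))"

end

theory Submission
  imports Defs
begin


lemma gslope_nonneg: "0 \<le> gslope u x"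
  unfolding gslope_def by (auto intro: Sup_upper)

lemma gslope_le_iff:
  fixes f :: "'a::metric_space \<Rightarrow> real"
  shows "gslope (\<lambda>x. ereal (f x)) x \<le> ereal c \<longleftrightarrow> 0 \<le> c \<and> (\<forall>y. f x - f y \<le> c * dist x y)"
proof -
  have eq: "max (ereal (f x) - ereal (f y)) 0 / ereal (dist x y) = ereal (max (f x - f y) 0 / dist x y)"
    if "y \<noteq> x" for y
    using that by (simp add: max_def zero_ereal_def)
  have "gslope (\<lambda>x. ereal (f x)) x \<le> ereal c \<longleftrightarrow>
     0 \<le> c \<and> (\<forall>y. y \<noteq> x \<longrightarrow> max (f x - f y) 0 / dist x y \<le> c)"
    unfolding gslope_def using eq by (auto simp: Sup_le_iff zero_ereal_def)
  also have "\<dots> \<longleftrightarrow> 0 \<le> c \<and> (\<forall>y. f x - f y \<le> c * dist x y)"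
  proof
    assume H: "0 \<le> c \<and> (\<forall>y. y \<noteq> x \<longrightarrow> max (f x - f y) 0 / dist x y \<le> c)"
    have "f x - f y \<le> c * dist x y" for y
    proof (cases "y = x")
      case False
      then have "dist x y > 0" by simp
      with H False have "max (f x - f y) 0 \<le> c * dist x y" by (auto simp: divide_le_eq)
      then show ?thesis by simp
    qed simp
    with H show "0 \<le> c \<and> (\<forall>y. f x - f y \<le> c * dist x y)" by blast
  next
    assume "0 \<le> c \<and> (\<forall>y. f x - f y \<le> c * dist x y)"
    then show "0 \<le> c \<and> (\<forall>y. y \<noteq> x \<longrightarrow> max (f x - f y) 0 / dist x y \<le> c)"
      by (auto simp: divide_le_eq)
  qed
  finally show ?thesis .
qed

lemma gslope_eqI:
  fixes f :: "'a::metric_space \<Rightarrow> real"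
  assumes a: "0 \<le> a" and up: "\<And>y. f x - f y \<le> a * dist x y"
    and low: "\<And>c. 0 \<le> c \<Longrightarrow> c < a \<Longrightarrow> \<not> (\<forall>y. f x - f y \<le> c * dist x y)"
  shows "gslope (\<lambda>x. ereal (f x)) x = ereal a"
proof (rule antisym)
  show "gslope (\<lambda>x. ereal (f x)) x \<le> ereal a" using a up by (simp add: gslope_le_iff)
  show "ereal a \<le> gslope (\<lambda>x. ereal (f x)) x"
  proof (rule ccontr)
    assume "\<not> ereal a \<le> gslope (\<lambda>x. ereal (f x)) x"
    then have lt: "gslope (\<lambda>x. ereal (f x)) x < ereal a" by simp
    moreover have "0 \<le> gslope (\<lambda>x. ereal (f x)) x" by (rule gslope_nonneg)
    ultimately obtain g where g: "gslope (\<lambda>x. ereal (f x)) x = ereal g"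
      by (cases "gslope (\<lambda>x. ereal (f x)) x") auto
    with lt have "g < a" by simp
    from g have "0 \<le> g \<and> (\<forall>y. f x - f y \<le> g * dist x y)"
      using gslope_le_iff[of f x g] by simp
    with low[of g] \<open>g < a\<close> show False by blast
  qed
qed

lemma gslope_eqD:
  fixes f :: "'a::metric_space \<Rightarrow> real"
  assumes "gslope (\<lambda>x. ereal (f x)) x = ereal a"
  shows "0 \<le> a" "\<And>y. f x - f y \<le> a * dist x y"
  using assms gslope_le_iff[of f x a] by auto

lemma eq_char:
  "(ereal lam * ereal v + G = ereal m) \<longleftrightarrow> G = ereal (m - lam * v)"
  by (cases G) auto

lemma lsc_finite:
  fixes f :: "'a::metric_space \<Rightarrow> real"
  assumes "\<And>x y. f x - f y \<le> K x * dist x y"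
  shows "lsc (\<lambda>x. ereal (f x))"
  unfolding lsc_def
proof
  fix t :: ereal
  show "open {y. t < ereal (f y)}"
    unfolding open_dist
  proof
    fix x assume "x \<in> {y. t < ereal (f y)}"
    then have tx: "t < ereal (f x)" by simp
    show "\<exists>e>0. \<forall>y. dist y x < e \<longrightarrow> y \<in> {y. t < ereal (f y)}"
    proof (cases t)
      case (real s)
      with tx have s: "s < f x" by simp
      define e where "e = (f x - s) / (\<bar>K x\<bar> + 1)"
      have e: "e > 0" using s by (simp add: e_def)
      have "t < ereal (f y)" if "dist y x < e" for y
      proof -
        have "f x - f y \<le> K x * dist x y" by (rule assms)
        also have "\<dots> \<le> \<bar>K x\<bar> * dist x y" by (simp add: mult_right_mono)
        also have "\<dots> \<le> \<bar>K x\<bar> * e" using that by (simp add: dist_commute mult_left_mono)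
        also have "\<dots> < (\<bar>K x\<bar> + 1) * e" using e by (simp add: distrib_right)
        also have "\<dots> = f x - s" by (simp add: e_def)
        finally show ?thesis using real by simp
      qed
      then show ?thesis using e by auto
    next
      case PInf then show ?thesis using tx by simp
    next
      case MInf then show ?thesis by (auto intro: exI[of _ 1])
    qed
  qed
qed

lemma INF_zero:
  fixes f :: "'a \<Rightarrow> real"
  assumes "\<And>x. 0 \<le> f x" "\<And>e. e > 0 \<Longrightarrow> \<exists>x. f x < e"
  shows "(INF x. ereal (f x)) = 0"
proof (rule antisym)
  show "0 \<le> (INF x. ereal (f x))" using assms by (auto intro: INF_greatest)
  show "(INF x. ereal (f x)) \<le> 0"
  proof (rule ereal_le_epsilon2)
    fix e :: real assume "0 < e"
    then obtain x where "f x < e" using assms by blast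
    then have "(INF x. ereal (f x)) \<le> ereal (f x)" by (auto intro: INF_lower)
    also have "\<dots> \<le> 0 + ereal e" using \<open>f x < e\<close> by simp
    finally show "(INF x. ereal (f x)) \<le> 0 + ereal e" .
  qed
qed

lemma inf0_small:
  fixes l :: "'a \<Rightarrow> real"
  assumes "\<And>x. l x \<ge> 0" "(INF x. l x) = 0" "e > 0"
  shows "\<exists>x. l x < e"
proof -
  have "bdd_below (range l)" using assms(1) by (intro bdd_belowI[of _ 0]) auto
  then show ?thesis using assms(2,3) cInf_less_iff[of "range l" e] by auto
qed

lemma solution_finite:
  fixes l :: "'a::metric_space \<Rightarrow> real"
  assumes "is_solution lam l v" "lam \<ge> 0"
  shows "v = (\<lambda>x. ereal (real_of_ereal (v x)))" "\<And>x. 0 \<le> real_of_ereal (v x)"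
    "\<And>x. gslope (\<lambda>x. ereal (real_of_ereal (v x))) x = ereal (l x - lam * real_of_ereal (v x))"
proof -
  have fin: "v x \<noteq> \<infinity>" for x
  proof
    assume inf: "v x = \<infinity>"
    then have "gslope v x = \<infinity>" by (simp add: gslope_def)
    moreover have "ereal lam * v x + gslope v x = ereal (l x)" using assms unfolding is_solution_def by blast
    ultimately show False using inf \<open>lam \<ge> 0\<close> by (cases "lam = 0") auto
  qed
  have ninf: "v x \<noteq> -\<infinity>" for x using assms unfolding is_solution_def by blast
  show veq: "v = (\<lambda>x. ereal (real_of_ereal (v x)))"
  proof
    fix x show "v x = ereal (real_of_ereal (v x))" using fin[of x] ninf[of x] by (cases "v x") auto
  qed
  have "0 \<le> v x" for x
  proof -
    have "(INF x. v x) \<le> v x" by (rule INF_lower) simp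
    then show ?thesis using assms unfolding is_solution_def by simp
  qed
  then show "\<And>x. 0 \<le> real_of_ereal (v x)" by (simp add: real_of_ereal_pos)
  fix x
  have "ereal lam * v x + gslope v x = ereal (l x)" using assms unfolding is_solution_def by blast
  then have "ereal lam * ereal (real_of_ereal (v x)) + gslope (\<lambda>x. ereal (real_of_ereal (v x))) x = ereal (l x)"
    using veq by metis
  then show "gslope (\<lambda>x. ereal (real_of_ereal (v x))) x = ereal (l x - lam * real_of_ereal (v x))"
    by (simp only: eq_char)
qed

lemma solution_finiteI:
  fixes f :: "'a::metric_space \<Rightarrow> real"
  assumes "lsc (\<lambda>x. ereal (f x))" "(INF x. ereal (f x)) = 0"
    "\<And>x. gslope (\<lambda>x. ereal (f x)) x = ereal (l x - lam * f x)"
  shows "is_solution lam l (\<lambda>x. ereal (f x))"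
  unfolding is_solution_def using assms by (simp add: eq_char)



lemma lsc_nbhd:
  fixes l :: "'a::metric_space \<Rightarrow> real"
  assumes "lsc l" "e > 0"
  shows "\<exists>r>0. \<forall>z. dist x z < r \<longrightarrow> l x - e < l z"
proof -
  have "open {z. l x - e < l z}" using assms(1) unfolding lsc_def by blast
  moreover have "x \<in> {z. l x - e < l z}" using assms(2) by simp
  ultimately obtain r where "r > 0" "\<forall>z. dist z x < r \<longrightarrow> z \<in> {z. l x - e < l z}"
    unfolding open_dist by blast
  then show ?thesis by (auto simp: dist_commute)
qed

locale lamctx =
  fixes lam :: real and l :: "'a::metric_space \<Rightarrow> real"
  assumes lam: "lam > 0" and nonneg: "\<And>x. l x \<ge> 0" and lsc_l: "lsc l"
begin

definition TT :: "nat \<Rightarrow> 'a \<Rightarrow> ereal" where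
  "TT n = (Top lam l ^^ n) (\<lambda>x. ereal (l x / lam))"

definition Tr :: "nat \<Rightarrow> 'a \<Rightarrow> real" where
  "Tr n x = real_of_ereal (TT n x)"

lemma TT_Suc: "TT (Suc n) x = (INF y. (TT n y + ereal (l x * dist x y)) / ereal (1 + lam * dist x y))"
  by (simp add: TT_def Top_def)

lemma pos_den: "1 + lam * dist x y > 0"
  using lam by (simp add: add_pos_nonneg)

lemma TT_bounds: "0 \<le> TT n x \<and> TT n x \<le> ereal (l x / lam)"
proof (induction n arbitrary: x)
  case 0
  then show ?case using lam nonneg by (simp add: TT_def)
next
  case (Suc n)
  have fin: "TT n y = ereal (real_of_ereal (TT n y))" for y
    using Suc[of y] by (cases "TT n y") auto
  have nn: "0 \<le> real_of_ereal (TT n y)" for y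
    using Suc[of y] by (simp add: real_of_ereal_pos)
  have trm: "(TT n y + ereal (l x * dist x y)) / ereal (1 + lam * dist x y)
      = ereal ((real_of_ereal (TT n y) + l x * dist x y) / (1 + lam * dist x y))" for y
    using pos_den[of x y] by (subst fin) simp
  have "0 \<le> TT (Suc n) x"
    unfolding TT_Suc trm
    using nn nonneg pos_den by (auto intro!: INF_greatest divide_nonneg_pos add_nonneg_nonneg)
  moreover have "TT (Suc n) x \<le> ereal (l x / lam)"
    unfolding TT_Suc
    by (rule INF_lower2[of x]) (use Suc[of x] in \<open>simp_all flip: one_ereal_def\<close>)
  ultimately show ?case by simp
qed

lemma TT_eq: "TT n x = ereal (Tr n x)"
  using TT_bounds[of n x] unfolding Tr_def by (cases "TT n x") auto

lemma Tr_bounds: "0 \<le> Tr n x" "Tr n x \<le> l x / lam"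
  using TT_bounds[of n x] unfolding TT_eq by auto

lemma Tr_Suc_le: "Tr (Suc n) x \<le> (Tr n y + l x * dist x y) / (1 + lam * dist x y)"
proof -
  have "TT (Suc n) x \<le> (TT n y + ereal (l x * dist x y)) / ereal (1 + lam * dist x y)"
    unfolding TT_Suc by (rule INF_lower) simp
  then show ?thesis using pos_den[of x y] unfolding TT_eq by simp
qed

lemma Tr_Suc_ge:
  assumes "\<And>y. w \<le> (Tr n y + l x * dist x y) / (1 + lam * dist x y)"
  shows "w \<le> Tr (Suc n) x"
proof -
  have "ereal w \<le> TT (Suc n) x"
    unfolding TT_Suc
  proof (rule INF_greatest)
    fix y
    show "ereal w \<le> (TT n y + ereal (l x * dist x y)) / ereal (1 + lam * dist x y)"
      using assms[of y] pos_den[of x y] unfolding TT_eq by simp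
  qed
  then show ?thesis unfolding TT_eq by simp
qed

lemma Tr_0: "Tr 0 x = l x / lam"
  by (simp add: Tr_def TT_def)

lemma TT_dec: "TT (Suc n) x \<le> TT n x"
  unfolding TT_Suc by (rule INF_lower2[of x]) (simp_all flip: one_ereal_def)

definition U :: "'a \<Rightarrow> real" where
  "U x = real_of_ereal (INF n. TT n x)"

lemma INF_bounds: "0 \<le> (INF n. TT n x)" "(INF n. TT n x) \<le> ereal (l x / lam)"
proof -
  show "0 \<le> (INF n. TT n x)" using TT_bounds by (auto intro: INF_greatest)
  show "(INF n. TT n x) \<le> ereal (l x / lam)"
    by (rule INF_lower2[of 0]) (simp_all add: TT_def)
qed

lemma INF_eq: "(INF n. TT n x) = ereal (U x)"
  using INF_bounds[of x] unfolding U_def by (cases "(INF n. TT n x)") auto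

lemma Top_inf_eq: "Top_inf lam l (\<lambda>x. ereal (l x / lam)) = (\<lambda>x. ereal (U x))"
proof
  fix x
  have "decseq (\<lambda>n. TT n x)" using TT_dec by (simp add: decseq_Suc_iff)
  then have "(\<lambda>n. TT n x) \<longlonglongrightarrow> (INF n. TT n x)" by (rule LIMSEQ_INF)
  then have "lim (\<lambda>n. TT n x) = (INF n. TT n x)" by (rule limI)
  then show "Top_inf lam l (\<lambda>x. ereal (l x / lam)) x = ereal (U x)"
    unfolding Top_inf_def INF_eq by (simp add: TT_def)
qed

lemma U_bounds: "0 \<le> U x" "U x \<le> l x / lam"
  using INF_bounds[of x] unfolding INF_eq by auto

lemma U_le_Tr: "U x \<le> Tr n x"
proof -
  have "(INF n. TT n x) \<le> TT n x" by (rule INF_lower) simp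
  then show ?thesis unfolding INF_eq by (simp add: TT_eq)
qed

lemma U_ge:
  assumes "\<And>n. w \<le> Tr n x"
  shows "w \<le> U x"
proof -
  have "ereal w \<le> (INF n. TT n x)" using assms by (auto intro!: INF_greatest simp: TT_eq)
  then show ?thesis unfolding INF_eq by simp
qed

lemma U_sub: "U x * (1 + lam * dist x y) \<le> U y + l x * dist x y"
proof -
  have "U x * (1 + lam * dist x y) - l x * dist x y \<le> Tr n y" for n
  proof -
    have "U x \<le> (Tr n y + l x * dist x y) / (1 + lam * dist x y)"
      using U_le_Tr[of x "Suc n"] Tr_Suc_le[of n x y] by linarith
    then show ?thesis using pos_den[of x y] by (simp add: le_divide_eq)
  qed
  then have "U x * (1 + lam * dist x y) - l x * dist x y \<le> U y" by (rule U_ge)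
  then show ?thesis by simp
qed

lemma U_max:
  assumes wl: "\<And>x. w x \<le> l x / lam"
    and ws: "\<And>x y. w x * (1 + lam * dist x y) \<le> w y + l x * dist x y"
  shows "w x \<le> U x"
proof -
  have "w x \<le> Tr n x" for n
  proof (induction n arbitrary: x)
    case 0 then show ?case using wl by (simp add: Tr_0)
  next
    case (Suc n)
    show ?case
    proof (rule Tr_Suc_ge)
      fix y
      have "w x * (1 + lam * dist x y) \<le> Tr n y + l x * dist x y"
        using ws[of x y] Suc[of y] by linarith
      then show "w x \<le> (Tr n y + l x * dist x y) / (1 + lam * dist x y)"
        using pos_den[of x y] by (simp add: le_divide_eq)
    qed
  qed
  then show ?thesis by (rule U_ge)
qed


lemma U_super:
  assumes c0: "0 \<le> c" and cl: "c < l x - lam * U x"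
  shows "\<not> (\<forall>y. U x - U y \<le> c * dist x y)"
proof
  assume H: "\<forall>y. U x - U y \<le> c * dist x y"
  define e where "e = (l x - lam * U x - c) / 4"
  have e: "e > 0" using cl by (simp add: e_def)
  define c' where "c' = c + e"
  obtain r where r: "r > 0" "\<And>z. dist x z < r \<Longrightarrow> l x - e < l z"
    using lsc_nbhd[OF lsc_l e] by blast
  define eta where "eta = min (e * r / 2) (e / lam)"
  have eta: "eta > 0" using e r lam by (simp add: eta_def)
  define phi where "phi z = U x + eta - c' * dist x z" for z
  define w where "w z = max (U z) (phi z)" for z
  have close: "dist x z < r" if "phi z > U z" for z
  proof -
    have "U x - U z \<le> c * dist x z" using H by blast
    with that have "e * dist x z < eta" by (simp add: phi_def c'_def algebra_simps)
    also have "\<dots> \<le> e * (r / 2)" unfolding eta_def by linarith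
    finally have "dist x z < r / 2" using e by simp
    then show ?thesis using r by simp
  qed
  have lamphi: "lam * phi z + c' < l z" if "phi z > U z" for z
  proof -
    have "lam * phi z \<le> lam * (U x + eta)"
      using lam e c0 by (simp add: phi_def c'_def mult_left_mono)
    also have "\<dots> = lam * U x + lam * eta" by (simp add: algebra_simps)
    also have "lam * eta \<le> e"
    proof -
      have "eta \<le> e / lam" by (simp add: eta_def)
      then show ?thesis using lam by (simp add: le_divide_eq mult.commute)
    qed
    then have "lam * U x + lam * eta \<le> lam * U x + e" by simp
    finally have "lam * phi z + c' \<le> lam * U x + e + c + e" by (simp add: c'_def)
    also have "\<dots> < l x - e" using cl by (simp add: e_def field_simps)
    also have "\<dots> < l z" using r(2)[OF close[OF that]] .
    finally show ?thesis .
  qed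
  have wl: "w z \<le> l z / lam" for z
  proof (cases "phi z > U z")
    case True
    have "lam * phi z \<le> l z" using lamphi[OF True] e c0 by (simp add: c'_def)
    then have "phi z \<le> l z / lam" using lam by (simp add: le_divide_eq mult.commute)
    then show ?thesis using U_bounds(2)[of z] by (simp add: w_def)
  next
    case False
    then show ?thesis using U_bounds(2)[of z] by (simp add: w_def)
  qed
  have ws: "w z * (1 + lam * dist z y) \<le> w y + l z * dist z y" for z y
  proof (cases "phi z > U z")
    case True
    have tri: "dist x y \<le> dist x z + dist z y" by (rule dist_triangle)
    have c'0: "c' \<ge> 0" using c0 e by (simp add: c'_def)
    have "phi z \<le> phi y + c' * dist z y"
      using mult_left_mono[OF tri c'0] by (simp add: phi_def algebra_simps)
    moreover have "(lam * phi z + c') * dist z y \<le> l z * dist z y"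
      using lamphi[OF True] by (intro mult_right_mono) auto
    ultimately have "phi z * (1 + lam * dist z y) \<le> phi y + l z * dist z y"
      by (simp add: algebra_simps)
    moreover have "phi y \<le> w y" by (simp add: w_def)
    moreover have "w z * (1 + lam * dist z y) = phi z * (1 + lam * dist z y)" using True by (simp add: w_def)
    ultimately show ?thesis by linarith
  next
    case False
    then have "w z * (1 + lam * dist z y) = U z * (1 + lam * dist z y)" by (simp add: w_def)
    moreover have "U y \<le> w y" by (simp add: w_def)
    ultimately show ?thesis using U_sub[of z y] by linarith
  qed
  have "w x \<le> U x" by (rule U_max[OF wl ws])
  moreover have "phi x = U x + eta" by (simp add: phi_def)
  ultimately show False using eta by (simp add: w_def)
qed


lemma U_sub': "U x - U y \<le> (l x - lam * U x) * dist x y"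
  using U_sub[of x y] by (simp add: algebra_simps)

lemma perron_pos:
  assumes inf0: "(INF x. l x) = 0"
  shows "is_perron_solution lam l (Top_inf lam l (\<lambda>x. ereal (l x / lam)))"
  unfolding Top_inf_eq is_perron_solution_def
proof
  show sol: "is_solution lam l (\<lambda>x. ereal (U x))"
  proof (rule solution_finiteI)
    show "lsc (\<lambda>x. ereal (U x))" by (rule lsc_finite[OF U_sub'])
    show "(INF x. ereal (U x)) = 0"
    proof (rule INF_zero)
      show "0 \<le> U x" for x by (rule U_bounds)
      fix e :: real assume "e > 0"
      then obtain x where "l x < e * lam" using inf0_small[OF nonneg inf0, of "e * lam"] lam by auto
      then have "l x / lam < e" using lam by (simp add: divide_less_eq)
      then show "\<exists>x. U x < e" using U_bounds(2)[of x] by (intro exI[of _ x]) linarith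
    qed
    fix x
    show "gslope (\<lambda>x. ereal (U x)) x = ereal (l x - lam * U x)"
    proof (rule gslope_eqI)
      show "0 \<le> l x - lam * U x" using U_bounds(2)[of x] lam by (simp add: le_divide_eq mult.commute)
      show "U x - U y \<le> (l x - lam * U x) * dist x y" for y by (rule U_sub')
      show "\<not> (\<forall>y. U x - U y \<le> c * dist x y)" if "0 \<le> c" "c < l x - lam * U x" for c
        using U_super that by blast
    qed
  qed
  show "\<forall>x. ereal (U x) = Sup {v x |v. is_solution lam l v}"
  proof
    fix x
    show "ereal (U x) = Sup {v x |v. is_solution lam l v}"
    proof (rule antisym)
      show "ereal (U x) \<le> Sup {v x |v. is_solution lam l v}"
        using sol by (auto intro: Sup_upper)
      show "Sup {v x |v. is_solution lam l v} \<le> ereal (U x)"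
      proof (rule Sup_least)
        fix t assume "t \<in> {v x |v. is_solution lam l v}"
        then obtain v where v: "is_solution lam l v" and t: "t = v x" by blast
        define f where "f z = real_of_ereal (v z)" for z
        have veq: "v = (\<lambda>z. ereal (f z))" using solution_finite(1)[OF v] lam unfolding f_def by simp
        have gs: "gslope (\<lambda>z. ereal (f z)) z = ereal (l z - lam * f z)" for z
          using solution_finite(3)[OF v] lam unfolding f_def by simp
        have "f x \<le> U x"
        proof (rule U_max)
          show "f z \<le> l z / lam" for z
            using gslope_eqD(1)[OF gs[of z]] lam by (simp add: le_divide_eq mult.commute)
          show "f z * (1 + lam * dist z y) \<le> f y + l z * dist z y" for z y
            using gslope_eqD(2)[OF gs[of z], of y] by (simp add: algebra_simps)
        qed
        then show "t \<le> ereal (U x)" using t veq by simp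
      qed
    qed
  qed
qed
end


lemma ln_diff_le: "0 < (a::real) \<Longrightarrow> 0 < b \<Longrightarrow> ln b - ln a \<le> (b - a) / a"
  using ln_le_minus_one[of "b / a"] by (simp add: ln_div diff_divide_distrib)

lemma boundary:
  fixes f l :: "'a::metric_space \<Rightarrow> real"
  assumes sub: "\<And>x y. f x \<le> f y + l x * dist x y"
    and small: "\<And>d. d > 0 \<Longrightarrow> \<exists>y. f y < d"
    and lnn: "\<And>x. l x \<ge> 0"
    and lim: "(\<lambda>n. l (xs n)) \<longlonglongrightarrow> 0"
    and summ: "summable (\<lambda>n. l (xs n) * dist (xs n) (xs (Suc n)))"
    and e: "e > 0"
  shows "\<exists>N. f (xs N) \<le> e"
proof (rule ccontr)
  assume "\<not> (\<exists>N. f (xs N) \<le> e)"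
  then have big: "e < f (xs n)" for n by (simp add: not_le)
  obtain y where y: "f y < e / 2" using small[of "e/2"] e by auto
  define D where "D n = dist (xs n) y" for n
  define S where "S = (\<Sum>n. l (xs n) * dist (xs n) (xs (Suc n)))"
  have hD: "e / 2 < l (xs n) * D n" for n
    using sub[of "xs n" y] big[of n] y unfolding D_def by linarith
  have Dpos: "D n > 0" for n
  proof -
    have "D n \<ge> 0" by (simp add: D_def)
    moreover have "D n \<noteq> 0" using hD[of n] e by auto
    ultimately show ?thesis by simp
  qed
  have step: "(e / 2) * (ln (D (Suc n)) - ln (D n)) \<le> l (xs n) * dist (xs n) (xs (Suc n))" for n
  proof -
    have tri: "D (Suc n) \<le> D n + dist (xs n) (xs (Suc n))"
      unfolding D_def using dist_triangle[of "xs (Suc n)" y "xs n"] by (simp add: dist_commute)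
    have "ln (D (Suc n)) - ln (D n) \<le> (D (Suc n) - D n) / D n"
      by (rule ln_diff_le[OF Dpos Dpos])
    also have "\<dots> \<le> dist (xs n) (xs (Suc n)) / D n"
      using tri Dpos[of n] by (intro divide_right_mono) auto
    finally have "(e / 2) * (ln (D (Suc n)) - ln (D n)) \<le> (e / 2) * (dist (xs n) (xs (Suc n)) / D n)"
      using e by (intro mult_left_mono) auto
    also have "\<dots> = ((e / 2) / D n) * dist (xs n) (xs (Suc n))" by simp
    also have "\<dots> \<le> l (xs n) * dist (xs n) (xs (Suc n))"
    proof (rule mult_right_mono)
      show "e / 2 / D n \<le> l (xs n)" using hD[of n] Dpos[of n] by (simp add: divide_le_eq)
    qed simp
    finally show ?thesis .
  qed
  have bnd: "ln (D M) \<le> ln (D 0) + 2 * S / e" for M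
  proof -
    have "(e / 2) * (ln (D M) - ln (D 0)) = (e / 2) * (\<Sum>n<M. ln (D (Suc n)) - ln (D n))"
      using sum_lessThan_telescope[of "\<lambda>n. ln (D n)" M] by simp
    also have "\<dots> = (\<Sum>n<M. (e / 2) * (ln (D (Suc n)) - ln (D n)))"
      by (rule sum_distrib_left)
    also have "\<dots> \<le> (\<Sum>n<M. l (xs n) * dist (xs n) (xs (Suc n)))"
      by (rule sum_mono) (rule step)
    also have "\<dots> \<le> S" unfolding S_def
      by (rule sum_le_suminf[OF summ]) (auto intro: mult_nonneg_nonneg lnn)
    finally have "(e / 2) * (ln (D M) - ln (D 0)) \<le> S" .
    then show ?thesis using e by (simp add: field_simps)
  qed
  define B where "B = ln (D 0) + 2 * S / e"
  have DB: "D M \<le> exp B" for M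
  proof -
    have "D M = exp (ln (D M))" using Dpos[of M] by simp
    also have "\<dots> \<le> exp B" using bnd[of M] unfolding B_def by simp
    finally show ?thesis .
  qed
  define k where "k = (e / 2) / exp B"
  have k: "k > 0" using e by (simp add: k_def)
  have lk: "k \<le> l (xs n)" for n
  proof -
    have "k \<le> (e / 2) / D n"
      unfolding k_def using e Dpos[of n] DB[of n] by (intro divide_left_mono) auto
    also have "\<dots> \<le> l (xs n)" using hD[of n] Dpos[of n] by (simp add: divide_le_eq)
    finally show ?thesis .
  qed
  from order_tendstoD(2)[OF lim k] obtain n where "l (xs n) < k"
    by (auto dest: eventually_happens)
  with lk[of n] show False by simp
qed



locale zctx =
  fixes l :: "'a::metric_space \<Rightarrow> real"
  assumes nonneg: "\<And>x. l x \<ge> 0" and lsc_l: "lsc l" and h0: "H0 l"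
begin

definition cost :: "(nat \<Rightarrow> 'a) \<Rightarrow> nat \<Rightarrow> real" where
  "cost xs n = l (xs n) * dist (xs n) (xs (Suc n))"

definition Adm :: "'a \<Rightarrow> (nat \<Rightarrow> 'a) set" where
  "Adm x = {xs. xs 0 = x \<and> (\<lambda>n. l (xs n)) \<longlonglongrightarrow> 0}"

lemma u0_eq: "u0 l x = (INF xs \<in> Adm x. (\<Sum>n. ereal (cost xs n)))"
  by (simp add: u0_def Adm_def cost_def)

lemma cost_nn: "0 \<le> cost xs n"
  by (simp add: cost_def nonneg)

lemma sum_fin: "summable (cost xs) \<Longrightarrow> (\<Sum>n. ereal (cost xs n)) = ereal (suminf (cost xs))"
  by (rule suminf_ereal')

lemma sum_inf: "\<not> summable (cost xs) \<Longrightarrow> (\<Sum>n. ereal (cost xs n)) = \<infinity>"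
proof (rule ccontr)
  assume ns: "\<not> summable (cost xs)" and "(\<Sum>n. ereal (cost xs n)) \<noteq> \<infinity>"
  then have "summable (\<lambda>n. real_of_ereal (ereal (cost xs n)))"
    by (intro summable_real_of_ereal) (auto simp: cost_nn)
  with ns show False by simp
qed

lemma prepend:
  assumes "ys \<in> Adm y"
  shows "case_nat x ys \<in> Adm x"
    "(\<Sum>n. ereal (cost (case_nat x ys) n)) = ereal (l x * dist x y) + (\<Sum>n. ereal (cost ys n))"
proof -
  have ys0: "ys 0 = y" and lim: "(\<lambda>n. l (ys n)) \<longlonglongrightarrow> 0" using assms by (auto simp: Adm_def)
  have "(\<lambda>n. l (case_nat x ys n)) \<longlonglongrightarrow> 0"
    by (rule LIMSEQ_imp_Suc) (simp add: lim)
  then show "case_nat x ys \<in> Adm x" by (simp add: Adm_def)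
  have cs: "cost (case_nat x ys) (Suc n) = cost ys n" for n by (simp add: cost_def)
  have c0: "cost (case_nat x ys) 0 = l x * dist x y" by (simp add: cost_def ys0)
  show "(\<Sum>n. ereal (cost (case_nat x ys) n)) = ereal (l x * dist x y) + (\<Sum>n. ereal (cost ys n))"
  proof (cases "summable (cost ys)")
    case True
    then have s2: "summable (cost (case_nat x ys))"
      using summable_Suc_iff[of "cost (case_nat x ys)"] cs by simp
    have "(\<Sum>n. cost (case_nat x ys) (Suc n)) = suminf (cost (case_nat x ys)) - cost (case_nat x ys) 0"
      by (rule suminf_split_head[OF s2])
    then have "suminf (cost (case_nat x ys)) = l x * dist x y + suminf (cost ys)"
      using cs c0 by simp
    then show ?thesis using sum_fin[OF s2] sum_fin[OF True] by simp
  next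
    case False
    then have s2: "\<not> summable (cost (case_nat x ys))"
      using summable_Suc_iff[of "cost (case_nat x ys)"] cs by simp
    show ?thesis using sum_inf[OF s2] sum_inf[OF False] by simp
  qed
qed


definition xb :: "nat \<Rightarrow> 'a" where
  "xb = (SOME xs. summable (\<lambda>n. l (xs n) * dist (xs n) (xs (Suc n))) \<and> (\<lambda>n. l (xs n)) \<longlonglongrightarrow> 0)"

lemma xb: "summable (cost xb)" "(\<lambda>n. l (xb n)) \<longlonglongrightarrow> 0"
proof -
  have "summable (\<lambda>n. l (xb n) * dist (xb n) (xb (Suc n))) \<and> (\<lambda>n. l (xb n)) \<longlonglongrightarrow> 0"
    unfolding xb_def using h0 unfolding H0_def by (rule someI_ex)
  then show "summable (cost xb)" "(\<lambda>n. l (xb n)) \<longlonglongrightarrow> 0" by (auto simp: cost_def[abs_def])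
qed

lemma xb_adm: "xb \<in> Adm (xb 0)"
  using xb by (simp add: Adm_def)

lemma sum_nn: "0 \<le> (\<Sum>n. ereal (cost xs n))"
  by (cases "summable (cost xs)") (auto simp: sum_fin sum_inf cost_nn intro: suminf_nonneg)

lemma u0_nn: "0 \<le> u0 l x"
  unfolding u0_eq by (auto intro: INF_greatest sum_nn)

lemma u0_upper: "u0 l x \<le> ereal (l x * dist x (xb 0) + suminf (cost xb))"
proof -
  have "u0 l x \<le> (\<Sum>n. ereal (cost (case_nat x xb) n))"
    unfolding u0_eq by (rule INF_lower) (rule prepend(1)[OF xb_adm])
  also have "\<dots> = ereal (l x * dist x (xb 0)) + (\<Sum>n. ereal (cost xb n))"
    by (rule prepend(2)[OF xb_adm])
  also have "\<dots> = ereal (l x * dist x (xb 0) + suminf (cost xb))"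
    using sum_fin[OF xb(1)] by simp
  finally show ?thesis .
qed

definition F :: "'a \<Rightarrow> real" where
  "F x = real_of_ereal (u0 l x)"

lemma u0_F: "u0 l x = ereal (F x)"
  using u0_nn[of x] u0_upper[of x] unfolding F_def by (cases "u0 l x") auto

lemma u0_F_fun: "u0 l = (\<lambda>x. ereal (F x))"
  using u0_F by auto

lemma F_nn: "0 \<le> F x"
  using u0_nn[of x] unfolding u0_F by simp

lemma F_le: "xs \<in> Adm x \<Longrightarrow> ereal (F x) \<le> (\<Sum>n. ereal (cost xs n))"
  unfolding u0_F[symmetric] u0_eq by (rule INF_lower)

lemma F_sub: "F x \<le> F y + l x * dist x y"
proof -
  have "ereal (F x - l x * dist x y) \<le> (\<Sum>n. ereal (cost ys n))" if ys: "ys \<in> Adm y" for ys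
  proof -
    have "ereal (F x) \<le> ereal (l x * dist x y) + (\<Sum>n. ereal (cost ys n))"
      using F_le[OF prepend(1)[OF ys]] prepend(2)[OF ys] by simp
    then show ?thesis
      by (cases "(\<Sum>n. ereal (cost ys n))") (auto simp: algebra_simps)
  qed
  then have "ereal (F x - l x * dist x y) \<le> u0 l y"
    unfolding u0_eq by (rule INF_greatest)
  then show ?thesis unfolding u0_F by simp
qed

lemma F_tail:
  assumes xs: "xs \<in> Adm z" and s: "summable (cost xs)"
  shows "F (xs N) \<le> (\<Sum>n. cost xs (n + N))"
proof -
  have adm: "(\<lambda>n. xs (n + N)) \<in> Adm (xs N)"
    using xs by (auto simp: Adm_def intro: LIMSEQ_ignore_initial_segment[where f="\<lambda>n. l (xs n)"])
  have ce: "cost (\<lambda>n. xs (n + N)) = (\<lambda>n. cost xs (n + N))"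
    by (auto simp: cost_def)
  have s2: "summable (cost (\<lambda>n. xs (n + N)))"
    unfolding ce by (rule summable_ignore_initial_segment[OF s])
  have "ereal (F (xs N)) \<le> (\<Sum>n. ereal (cost (\<lambda>n. xs (n + N)) n))" by (rule F_le[OF adm])
  also have "\<dots> = ereal (\<Sum>n. cost xs (n + N))" using sum_fin[OF s2] ce by simp
  finally show ?thesis by simp
qed

lemma F_ev:
  assumes xs: "xs \<in> Adm z" and s: "summable (cost xs)" and e: "e > 0"
  shows "eventually (\<lambda>N. F (xs N) < e) sequentially"
proof -
  obtain N0 where N0: "\<forall>n\<ge>N0. norm (\<Sum>i. cost xs (i + n)) < e"
    using suminf_exist_split[OF e s] by blast
  show ?thesis
  proof (rule eventually_sequentiallyI[of N0])
    fix N assume "N0 \<le> N"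
    then have "norm (\<Sum>i. cost xs (i + N)) < e" using N0 by blast
    then show "F (xs N) < e" using F_tail[OF xs s, of N] by simp
  qed
qed

lemma F_max:
  assumes ws: "\<And>x y. w x \<le> w y + l x * dist x y"
    and wb: "\<And>z xs e. xs \<in> Adm z \<Longrightarrow> summable (cost xs) \<Longrightarrow> e > 0 \<Longrightarrow> \<exists>N. w (xs N) \<le> e"
  shows "w z \<le> F z"
proof -
  have "ereal (w z) \<le> (\<Sum>n. ereal (cost xs n))" if xs: "xs \<in> Adm z" for xs
  proof (cases "summable (cost xs)")
    case False then show ?thesis by (simp add: sum_inf)
  next
    case True
    have chain: "w (xs 0) \<le> w (xs N) + (\<Sum>n<N. cost xs n)" for N
    proof (induction N)
      case (Suc N)
      have "w (xs N) \<le> w (xs (Suc N)) + cost xs N" using ws[of "xs N" "xs (Suc N)"] by (simp add: cost_def)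
      with Suc show ?case by simp
    qed simp
    have "w z \<le> suminf (cost xs) + e" if e: "e > 0" for e
    proof -
      obtain N where N: "w (xs N) \<le> e" using wb[OF xs True e] by blast
      have "(\<Sum>n<N. cost xs n) \<le> suminf (cost xs)"
        by (rule sum_le_suminf[OF True]) (auto simp: cost_nn)
      moreover have "xs 0 = z" using xs by (simp add: Adm_def)
      ultimately show ?thesis using chain[of N] N by simp
    qed
    then have "w z \<le> suminf (cost xs)" by (rule field_le_epsilon)
    then show ?thesis using sum_fin[OF True] by simp
  qed
  then have "ereal (w z) \<le> u0 l z" unfolding u0_eq by (rule INF_greatest)
  then show ?thesis unfolding u0_F by simp
qed


lemma F_super:
  assumes c0: "0 \<le> c" and cl: "c < l x"
  shows "\<not> (\<forall>y. F x - F y \<le> c * dist x y)"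
proof
  assume H: "\<forall>y. F x - F y \<le> c * dist x y"
  define e where "e = (l x - c) / 3"
  have e: "e > 0" using cl by (simp add: e_def)
  define c' where "c' = c + e"
  obtain r where r: "r > 0" "\<And>z. dist x z < r \<Longrightarrow> l x - e < l z"
    using lsc_nbhd[OF lsc_l e] by blast
  define eta where "eta = e * r / 2"
  have eta: "eta > 0" using e r by (simp add: eta_def)
  define phi where "phi z = F x + eta - c' * dist x z" for z
  define w where "w z = max (F z) (phi z)" for z
  have close: "dist x z < r" if "phi z > F z" for z
  proof -
    have "F x - F z \<le> c * dist x z" using H by blast
    with that have "e * dist x z < eta" by (simp add: phi_def c'_def algebra_simps)
    also have "\<dots> = e * (r / 2)" by (simp add: eta_def)
    finally have "dist x z < r / 2" using e by simp
    then show ?thesis using r by simp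
  qed
  have c'l: "c' < l z" if "phi z > F z" for z
    using cl r(2)[OF close[OF that]] unfolding c'_def e_def by (simp add: field_simps)
  have ws: "w z \<le> w y + l z * dist z y" for z y
  proof (cases "phi z > F z")
    case True
    have tri: "dist x y \<le> dist x z + dist z y" by (rule dist_triangle)
    have c'0: "c' \<ge> 0" using c0 e by (simp add: c'_def)
    have "phi z \<le> phi y + c' * dist z y"
      using mult_left_mono[OF tri c'0] by (simp add: phi_def algebra_simps)
    moreover have "c' * dist z y \<le> l z * dist z y"
      using c'l[OF True] by (intro mult_right_mono) auto
    moreover have "phi y \<le> w y" by (simp add: w_def)
    moreover have "w z = phi z" using True by (simp add: w_def)
    ultimately show ?thesis by linarith
  next
    case False
    then have "w z = F z" by (simp add: w_def)
    moreover have "F y \<le> w y" by (simp add: w_def)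
    ultimately show ?thesis using F_sub[of z y] by linarith
  qed
  have wb: "\<exists>N. w (xs N) \<le> e'" if xs: "xs \<in> Adm z" and s: "summable (cost xs)" and e': "e' > 0" for z xs e'
  proof -
    have lim: "(\<lambda>n. l (xs n)) \<longlonglongrightarrow> 0" using xs by (simp add: Adm_def)
    have pos: "0 < l x - e" unfolding e_def using cl c0 by (simp add: field_simps)
    have "eventually (\<lambda>N. l (xs N) < l x - e) sequentially"
      by (rule order_tendstoD(2)[OF lim pos])
    moreover have "eventually (\<lambda>N. F (xs N) < e') sequentially" by (rule F_ev[OF xs s e'])
    ultimately have "eventually (\<lambda>N. l (xs N) < l x - e \<and> F (xs N) < e') sequentially"
      by (rule eventually_conj)
    then obtain N where N: "l (xs N) < l x - e" "F (xs N) < e'"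
      by (auto dest: eventually_happens)
    have "\<not> phi (xs N) > F (xs N)"
    proof
      assume "phi (xs N) > F (xs N)"
      from r(2)[OF close[OF this]] N(1) show False by simp
    qed
    then have "w (xs N) = F (xs N)" by (simp add: w_def)
    with N(2) show ?thesis by (intro exI[of _ N]) simp
  qed
  have "w x \<le> F x" by (rule F_max[OF ws wb])
  moreover have "phi x = F x + eta" by (simp add: phi_def)
  ultimately show False using eta by (simp add: w_def)
qed

lemma perron_zero: "is_perron_solution 0 l (u0 l)"
  unfolding u0_F_fun is_perron_solution_def
proof
  show sol: "is_solution 0 l (\<lambda>x. ereal (F x))"
  proof (rule solution_finiteI)
    show "lsc (\<lambda>x. ereal (F x))" by (rule lsc_finite[of F l]) (use F_sub in \<open>simp add: algebra_simps\<close>)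
    show "(INF x. ereal (F x)) = 0"
    proof (rule INF_zero)
      show "0 \<le> F x" for x by (rule F_nn)
      fix e :: real assume "e > 0"
      from F_ev[OF xb_adm xb(1) this] obtain N where "F (xb N) < e"
        by (auto dest: eventually_happens)
      then show "\<exists>x. F x < e" by blast
    qed
    fix x
    show "gslope (\<lambda>x. ereal (F x)) x = ereal (l x - 0 * F x)"
    proof -
      have "gslope (\<lambda>x. ereal (F x)) x = ereal (l x)"
      proof (rule gslope_eqI)
        show "0 \<le> l x" by (rule nonneg)
        show "F x - F y \<le> l x * dist x y" for y using F_sub[of x y] by simp
        show "\<not> (\<forall>y. F x - F y \<le> c * dist x y)" if "0 \<le> c" "c < l x" for c
          using F_super that by blast
      qed
      then show ?thesis by simp
    qed
  qed
  show "\<forall>x. ereal (F x) = Sup {v x |v. is_solution 0 l v}"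
  proof
    fix x
    show "ereal (F x) = Sup {v x |v. is_solution 0 l v}"
    proof (rule antisym)
      show "ereal (F x) \<le> Sup {v x |v. is_solution 0 l v}"
        using sol by (auto intro: Sup_upper)
      show "Sup {v x |v. is_solution 0 l v} \<le> ereal (F x)"
      proof (rule Sup_least)
        fix t assume "t \<in> {v x |v. is_solution 0 l v}"
        then obtain v where v: "is_solution 0 l v" and t: "t = v x" by blast
        define f where "f z = real_of_ereal (v z)" for z
        have veq: "v = (\<lambda>z. ereal (f z))" using solution_finite(1)[OF v] unfolding f_def by simp
        have gs: "gslope (\<lambda>z. ereal (f z)) z = ereal (l z - 0 * f z)" for z
          using solution_finite(3)[OF v] unfolding f_def by simp
        have fsub: "f z \<le> f y + l z * dist z y" for z y
          using gslope_eqD(2)[OF gs[of z], of y] by simp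
        have inf: "(INF z. ereal (f z)) = 0" using v veq unfolding is_solution_def by simp
        have small: "\<exists>y. f y < d" if d: "d > 0" for d
        proof (rule ccontr)
          assume "\<not> (\<exists>y. f y < d)"
          then have "ereal d \<le> (INF z. ereal (f z))" by (auto intro: INF_greatest simp: not_less)
          with inf d show False by simp
        qed
        have "f x \<le> F x"
        proof (rule F_max)
          show "f z \<le> f y + l z * dist z y" for z y by (rule fsub)
          show "\<exists>N. f (xs N) \<le> e" if "xs \<in> Adm z" "summable (cost xs)" "e > 0" for z xs e
            using boundary[of f l, OF fsub small nonneg _ _ \<open>e > 0\<close>] that
            by (auto simp: Adm_def cost_def[abs_def])
        qed
        then show "t \<le> ereal (F x)" using t veq by simp
      qed
    qed
  qed
qed

end

theorem corollary4p7:
  fixes l :: "'a::metric_space \<Rightarrow> real"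
  assumes nonneg: "\<And>x. l x \<ge> 0"
    and lsc_l: "lsc l"
    and inf0: "(INF x. l x) = 0"
  shows "(\<forall>lam>0. is_perron_solution lam l (Top_inf lam l (\<lambda>x. ereal (l x / lam))))
       \<and> (H0 l \<longrightarrow> is_perron_solution 0 l (u0 l))"
proof (intro conjI allI impI)
  fix lam :: real assume "lam > 0"
  then have "lamctx lam l" using nonneg lsc_l by (intro lamctx.intro) auto
  then show "is_perron_solution lam l (Top_inf lam l (\<lambda>x. ereal (l x / lam)))"
    by (rule lamctx.perron_pos[OF _ inf0])
next
  assume "H0 l"
  then have "zctx l" using nonneg lsc_l by (intro zctx.intro) auto
  then show "is_perron_solution 0 l (u0 l)" by (rule zctx.perron_zero)
qed

end
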